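(* Let $\Gamma$ be an embedding of $K_{n,n}$ in $S^3$ with vertex sets $V$ and $W$, and let $G \leq \mathrm{TSG}_+(\Gamma)$ be a subgroup isomorphic to $A_4$ or $A_5$. Then every element $g \in G$ satisfies $g(V) = V$ (and hence $g(W) = W$).
   Context: $K_{n,n}$ is the complete bipartite graph with vertex sets $V$, $W$ of $n$ vertices each; every vertex of $V$ is adjacent to every vertex of $W$, and there are no other edges. $\mathrm{TSG}_+(\Gamma)$ is the subgroup of $\mathrm{Aut}(K_{n,n})$ consisting of automorphisms induced by orientation preserving homeomorphisms of $(S^3,\Gamma)$. *)

theory Defs
  imports "HOL-Homology.Homology" "HOL-Algebra.Sym_Groups" "HOL-Algebra.Bij"
begin

text \<open>S^3 is modelled as nsphere 3 (unit sphere in R^4, points of type nat => real).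
  An embedding of K_{n,n} with vertex sets V, W is given by vertex positions pos
  and, for each edge (v,w) with v in V, w in W, an ea (injective path on [0,1])
  from pos v to pos w; distinct edges meet only in common endpoints and no vertex
  lies in the interior of an edge.\<close>

definition kbip_adj :: "'v set \<Rightarrow> 'v set \<Rightarrow> 'v \<Rightarrow> 'v \<Rightarrow> bool" where
  "kbip_adj V W x y \<longleftrightarrow> (x \<in> V \<and> y \<in> W) \<or> (x \<in> W \<and> y \<in> V)"

definition edge_img ::
  "'v set \<Rightarrow> ('v \<Rightarrow> 'v \<Rightarrow> real \<Rightarrow> nat \<Rightarrow> real) \<Rightarrow> 'v \<Rightarrow> 'v \<Rightarrow> (nat \<Rightarrow> real) set" where
  "edge_img V ea x y = (if x \<in> V then ea x y ` {0..1} else ea y x ` {0..1})"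

definition graph_img ::
  "'v set \<Rightarrow> 'v set \<Rightarrow> ('v \<Rightarrow> nat \<Rightarrow> real) \<Rightarrow> ('v \<Rightarrow> 'v \<Rightarrow> real \<Rightarrow> nat \<Rightarrow> real) \<Rightarrow> (nat \<Rightarrow> real) set" where
  "graph_img V W pos ea = pos ` (V \<union> W) \<union> (\<Union>v\<in>V. \<Union>w\<in>W. ea v w ` {0..1})"

definition Knn_embedding ::
  "'v set \<Rightarrow> 'v set \<Rightarrow> ('v \<Rightarrow> nat \<Rightarrow> real) \<Rightarrow> ('v \<Rightarrow> 'v \<Rightarrow> real \<Rightarrow> nat \<Rightarrow> real) \<Rightarrow> bool" where
  "Knn_embedding V W pos ea \<longleftrightarrow>
     inj_on pos (V \<union> W) \<and>
     pos ` (V \<union> W) \<subseteq> topspace (nsphere 3) \<and>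
     (\<forall>v\<in>V. \<forall>w\<in>W.
        pathin (nsphere 3) (ea v w) \<and> inj_on (ea v w) {0..1} \<and>
        ea v w 0 = pos v \<and> ea v w 1 = pos w \<and>
        (\<forall>u\<in>V \<union> W. pos u \<in> ea v w ` {0..1} \<longrightarrow> u = v \<or> u = w)) \<and>
     (\<forall>v\<in>V. \<forall>w\<in>W. \<forall>v'\<in>V. \<forall>w'\<in>W. (v, w) \<noteq> (v', w') \<longrightarrow>
        ea v w ` {0..1} \<inter> ea v' w' ` {0..1} \<subseteq> pos ` ({v, w} \<inter> {v', w'}))"

definition Knn_aut :: "'v set \<Rightarrow> 'v set \<Rightarrow> ('v \<Rightarrow> 'v) set" where
  "Knn_aut V W = {\<sigma> \<in> Bij (V \<union> W). \<forall>x\<in>V \<union> W. \<forall>y\<in>V \<union> W.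
       kbip_adj V W x y \<longleftrightarrow> kbip_adj V W (\<sigma> x) (\<sigma> y)}"

definition orientation_preserving_homeo_S3 :: "((nat \<Rightarrow> real) \<Rightarrow> nat \<Rightarrow> real) \<Rightarrow> bool" where
  "orientation_preserving_homeo_S3 h \<longleftrightarrow>
     homeomorphic_map (nsphere 3) (nsphere 3) h \<and> Brouwer_degree2 3 h = 1"

definition TSG_plus ::
  "'v set \<Rightarrow> 'v set \<Rightarrow> ('v \<Rightarrow> nat \<Rightarrow> real) \<Rightarrow> ('v \<Rightarrow> 'v \<Rightarrow> real \<Rightarrow> nat \<Rightarrow> real) \<Rightarrow> ('v \<Rightarrow> 'v) set" where
  "TSG_plus V W pos ea = {\<sigma> \<in> Knn_aut V W. \<exists>h.
      orientation_preserving_homeo_S3 h \<and>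
      h ` graph_img V W pos ea = graph_img V W pos ea \<and>
      (\<forall>x\<in>V \<union> W. h (pos x) = pos (\<sigma> x)) \<and>
      (\<forall>v\<in>V. \<forall>w\<in>W. h ` edge_img V ea v w = edge_img V ea (\<sigma> v) (\<sigma> w))}"

end

theory Submission
  imports Defs
begin

lemma set_aux: "X \<union> Y = V \<union> W \<Longrightarrow> X \<subseteq> V \<Longrightarrow> Y \<subseteq> W \<Longrightarrow> V \<inter> W = {} \<Longrightarrow> X = V \<and> Y = W"
  by blast

lemma knn_aut_dich:
  assumes "\<sigma> \<in> Knn_aut V W" "V \<inter> W = {}" "V = {} \<longleftrightarrow> W = {}"
  shows "(\<sigma> ` V = V \<and> \<sigma> ` W = W) \<or> (\<sigma> ` V = W \<and> \<sigma> ` W = V)"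
proof (cases "V = {}")
  case True thus ?thesis using assms by auto
next
  case False
  then obtain x where x: "x \<in> V" by auto
  have bij: "bij_betw \<sigma> (V \<union> W) (V \<union> W)" and adj: "\<And>a b. a \<in> V \<union> W \<Longrightarrow> b \<in> V \<union> W \<Longrightarrow>
      kbip_adj V W a b \<longleftrightarrow> kbip_adj V W (\<sigma> a) (\<sigma> b)"
  proof -
    have m: "\<sigma> \<in> Bij (V \<union> W)" and
      a: "\<forall>x\<in>V \<union> W. \<forall>y\<in>V \<union> W. kbip_adj V W x y \<longleftrightarrow> kbip_adj V W (\<sigma> x) (\<sigma> y)"
      using assms(1) unfolding Knn_aut_def by blast+
    show "bij_betw \<sigma> (V \<union> W) (V \<union> W)" using m unfolding Bij_def by blast
    show "\<And>a b. a \<in> V \<union> W \<Longrightarrow> b \<in> V \<union> W \<Longrightarrow>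
      kbip_adj V W a b \<longleftrightarrow> kbip_adj V W (\<sigma> a) (\<sigma> b)" using a by blast
  qed
  have im: "\<sigma> ` (V \<union> W) = V \<union> W" using bij by (rule bij_betw_imp_surj_on)
  have im2: "\<sigma> ` V \<union> \<sigma> ` W = V \<union> W" using im by (simp add: image_Un)
  have inS: "\<And>a. a \<in> V \<union> W \<Longrightarrow> \<sigma> a \<in> V \<union> W" using im by auto
  show ?thesis
  proof (cases "\<sigma> x \<in> V")
    case True
    have A: "\<sigma> ` V \<subseteq> V"
    proof
      fix z assume "z \<in> \<sigma> ` V"
      then obtain y where y: "y \<in> V" "z = \<sigma> y" by auto
      have "\<not> kbip_adj V W x y" using x y assms(2) unfolding kbip_adj_def by auto
      hence "\<not> kbip_adj V W (\<sigma> x) (\<sigma> y)" using adj x y by auto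
      thus "z \<in> V" using inS[of y] y True unfolding kbip_adj_def by auto
    qed
    have B: "\<sigma> ` W \<subseteq> W"
    proof
      fix z assume "z \<in> \<sigma> ` W"
      then obtain y where y: "y \<in> W" "z = \<sigma> y" by auto
      have "kbip_adj V W x y" using x y unfolding kbip_adj_def by auto
      hence "kbip_adj V W (\<sigma> x) (\<sigma> y)" using adj x y by auto
      thus "z \<in> W" using y True assms(2) unfolding kbip_adj_def by auto
    qed
    show ?thesis using set_aux[OF im2 A B assms(2)] by simp
  next
    case False
    hence F: "\<sigma> x \<in> W" using inS x by auto
    have A: "\<sigma> ` V \<subseteq> W"
    proof
      fix z assume "z \<in> \<sigma> ` V"
      then obtain y where y: "y \<in> V" "z = \<sigma> y" by auto
      have "\<not> kbip_adj V W x y" using x y assms(2) unfolding kbip_adj_def by auto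
      hence "\<not> kbip_adj V W (\<sigma> x) (\<sigma> y)" using adj x y by auto
      thus "z \<in> W" using inS[of y] y F unfolding kbip_adj_def by auto
    qed
    have B: "\<sigma> ` W \<subseteq> V"
    proof
      fix z assume "z \<in> \<sigma> ` W"
      then obtain y where y: "y \<in> W" "z = \<sigma> y" by auto
      have "kbip_adj V W x y" using x y unfolding kbip_adj_def by auto
      hence "kbip_adj V W (\<sigma> x) (\<sigma> y)" using adj x y by auto
      thus "z \<in> V" using y F assms(2) unfolding kbip_adj_def by auto
    qed
    have d2: "W \<inter> V = {}" using assms(2) by blast
    have im3: "\<sigma> ` V \<union> \<sigma> ` W = W \<union> V" using im2 by blast
    show ?thesis using set_aux[OF im3 A B d2] by simp
  qed
qed

lemma three_cycle_cube:
  assumes "h \<in> three_cycles k"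
  shows "h \<circ> h \<circ> h = id"
proof -
  obtain cs where cs: "h = cycle_of_list cs" "cycle cs" "length cs = 3"
    using assms by auto
  obtain a b c where cs_def: "cs = [a, b, c]"
    using stupid_lemma[OF cs(3)] by auto
  have d: "a \<noteq> b" "a \<noteq> c" "b \<noteq> c" using cs(2) cs_def by auto
  show ?thesis
    unfolding cs(1) cs_def
  proof
    fix x show "(cycle_of_list [a,b,c] \<circ> cycle_of_list [a,b,c] \<circ> cycle_of_list [a,b,c]) x = id x"
      using d by (simp add: Transposition.transpose_def)
  qed
qed


lemma compose_img: "A \<subseteq> S \<Longrightarrow> compose S f g ` A = f ` g ` A"
  by (auto simp: compose_def)

lemma main_alt:
  assumes disj: "V \<inter> W = {}" and ne: "V = {} \<longleftrightarrow> W = {}"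
    and sub: "subgroup G (BijGroup (V \<union> W))" and GT: "G \<subseteq> Knn_aut V W"
    and iso: "(BijGroup (V \<union> W))\<lparr>carrier := G\<rparr> \<cong> alt_group k"
  shows "\<forall>g\<in>G. g ` V = V \<and> g ` W = W"
proof -
  define S where "S = V \<union> W"
  define H where "H = (BijGroup S)\<lparr>carrier := G\<rparr>"
  have grpH: "group H" unfolding H_def S_def
    using group.subgroup_imp_group[OF group_BijGroup sub] .
  have GB: "G \<subseteq> Bij S" using subgroup.subset[OF sub] unfolding S_def BijGroup_def by simp
  have "H \<cong> alt_group k" using iso unfolding H_def S_def .
  hence "alt_group k \<cong> H" by (rule group.iso_sym[OF grpH])
  then obtain \<phi> where phi: "\<phi> \<in> iso (alt_group k) H" unfolding is_iso_def by auto
  have hom: "group_hom (alt_group k) H \<phi>"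
    using phi grpH alt_group_is_group unfolding group_hom_def group_hom_axioms_def iso_def by auto
  have bij: "bij_betw \<phi> (carrier (alt_group k)) G" using phi unfolding iso_def H_def by auto
  have multH: "\<And>a b. a \<in> G \<Longrightarrow> b \<in> G \<Longrightarrow> a \<otimes>\<^bsub>H\<^esub> b = compose S a b"
    using GB unfolding H_def BijGroup_def by auto
  have oneH: "\<one>\<^bsub>H\<^esub> = (\<lambda>x\<in>S. x)" unfolding H_def BijGroup_def by simp
  have phiG: "\<And>x. x \<in> carrier (alt_group k) \<Longrightarrow> \<phi> x \<in> G"
    by (rule bij_betw_apply[OF bij])
  have phimult: "\<And>x y. x \<in> carrier (alt_group k) \<Longrightarrow> y \<in> carrier (alt_group k) \<Longrightarrow>
      \<phi> (x \<otimes>\<^bsub>alt_group k\<^esub> y) = compose S (\<phi> x) (\<phi> y)"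
    using group_hom.hom_mult[OF hom] multH phiG by metis
  have VS: "V \<subseteq> S" unfolding S_def by auto
  have gS: "\<And>g. g \<in> G \<Longrightarrow> g ` S \<subseteq> S" by (meson Bij_imp_funcset GB funcset_image subsetD)
  have dich: "\<And>g. g \<in> G \<Longrightarrow> (g ` V = V \<and> g ` W = W) \<or> (g ` V = W \<and> g ` W = V)"
    using knn_aut_dich GT disj ne by blast
  have pres: "g ` W = W" if g: "g \<in> G" and gv: "g ` V = V" for g
  proof (cases "g ` W = W")
    case False
    hence "g ` V = W" "g ` W = V" using dich[OF g] by auto
    hence "V = W" using gv by simp
    hence "W = {}" using disj by simp
    thus ?thesis by simp
  qed
  have cube: "\<phi> x ` V = V" if x: "x \<in> carrier (alt_group k)"
      and x3: "x \<otimes>\<^bsub>alt_group k\<^esub> x \<otimes>\<^bsub>alt_group k\<^esub> x = \<one>\<^bsub>alt_group k\<^esub>" for x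
  proof -
    interpret A: group "alt_group k" by (rule alt_group_is_group)
    define g where "g = \<phi> x"
    have g: "g \<in> G" using phiG x g_def by simp
    have e1: "\<phi> (x \<otimes>\<^bsub>alt_group k\<^esub> x \<otimes>\<^bsub>alt_group k\<^esub> x) = compose S (compose S g g) g"
      using phimult x g_def by simp
    have e2: "\<phi> (x \<otimes>\<^bsub>alt_group k\<^esub> x \<otimes>\<^bsub>alt_group k\<^esub> x) = (\<lambda>x\<in>S. x)"
      using x3 group_hom.hom_one[OF hom] oneH by simp
    have e: "compose S (compose S g g) g = (\<lambda>x\<in>S. x)" using e1 e2 by metis
    have gV: "g ` V \<subseteq> S" using gS[OF g] VS by auto
    have "compose S (compose S g g) g ` V = g ` g ` g ` V"
      by (simp only: compose_img[OF VS] compose_img[OF gV])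
    moreover have "(\<lambda>x\<in>S. x) ` V = V" using VS by auto
    ultimately have ggg: "g ` g ` g ` V = V" using e by simp
    show ?thesis
    proof (cases "g ` V = V")
      case True thus ?thesis using g_def by simp
    next
      case False
      hence "g ` V = W" "g ` W = V" using dich[OF g] by auto
      hence "V = W" using ggg by simp
      thus ?thesis using disj g_def by auto
    qed
  qed
  have gen: "\<phi> x ` V = V" if "x \<in> generate (alt_group k) (three_cycles k)" for x
    using that
  proof (induction rule: generate.induct)
    case one
    have "\<phi> \<one>\<^bsub>alt_group k\<^esub> = (\<lambda>x\<in>S. x)"
      using group_hom.hom_one[OF hom] oneH by simp
    thus ?case using VS by auto
  next
    case (incl h)
    have hc: "h \<in> carrier (alt_group k)" using incl three_cycles_incl by blast
    show ?case
      by (rule cube[OF hc]) (use three_cycle_cube[OF incl] in \<open>simp add: alt_group_mult alt_group_one comp_assoc\<close>)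
  next
    case (inv h)
    interpret A: group "alt_group k" by (rule alt_group_is_group)
    have hc: "h \<in> carrier (alt_group k)" using inv three_cycles_incl by blast
    have c3: "h \<circ> h \<circ> h = id" using three_cycle_cube[OF inv] .
    have "inv\<^bsub>alt_group k\<^esub> h = h \<otimes>\<^bsub>alt_group k\<^esub> h"
      by (rule A.inv_equality) (use hc c3 A.m_closed[OF hc hc] in \<open>simp_all add: alt_group_mult alt_group_one\<close>)
    moreover have "\<phi> (h \<otimes>\<^bsub>alt_group k\<^esub> h) ` V = V"
    proof -
      have hV: "\<phi> h ` V = V" using cube[OF hc] c3 by (simp add: alt_group_mult alt_group_one comp_assoc)
      have "\<phi> h ` V \<subseteq> S" using hV VS by simp
      show ?thesis by (simp only: phimult[OF hc hc] compose_img[OF VS] hV)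
    qed
    ultimately show ?case by simp
  next
    case (eng h1 h2)
    have c: "h1 \<in> carrier (alt_group k)" "h2 \<in> carrier (alt_group k)"
      using eng(1,2) alt_group_carrier_as_three_cycles by blast+
    have "\<phi> h2 ` V \<subseteq> S" using eng(4) VS by simp
    show ?case by (simp only: phimult[OF c] compose_img[OF VS] eng(3,4))
  qed
  show ?thesis
  proof
    fix g assume g: "g \<in> G"
    then obtain x where x: "x \<in> carrier (alt_group k)" "g = \<phi> x"
      using bij by (metis bij_betw_imp_surj_on imageE)
    have "g ` V = V" using gen x alt_group_carrier_as_three_cycles by blast
    thus "g ` V = V \<and> g ` W = W" using pres g by simp
  qed
qed

theorem lemma1:
  fixes V W :: "'v set" and n :: nat
    and pos :: "'v \<Rightarrow> nat \<Rightarrow> real" and ea :: "'v \<Rightarrow> 'v \<Rightarrow> real \<Rightarrow> nat \<Rightarrow> real"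
    and G :: "('v \<Rightarrow> 'v) set"
  assumes "finite V" "finite W" "V \<inter> W = {}" "card V = n" "card W = n"
    and "Knn_embedding V W pos ea"
    and "subgroup G (BijGroup (V \<union> W))"
    and "G \<subseteq> TSG_plus V W pos ea"
    and "(BijGroup (V \<union> W))\<lparr>carrier := G\<rparr> \<cong> alt_group 4 \<or>
         (BijGroup (V \<union> W))\<lparr>carrier := G\<rparr> \<cong> alt_group 5"
  shows "\<forall>g\<in>G. g ` V = V \<and> g ` W = W"
proof -
  have ne: "V = {} \<longleftrightarrow> W = {}" using assms(1,2,4,5) by auto
  have GT: "G \<subseteq> Knn_aut V W" using assms(8) unfolding TSG_plus_def by auto
  show ?thesis using assms(9) main_alt[OF assms(3) ne assms(7) GT] by blast
qed

end
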